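(* Let $n,a,b\in\mathbb{Z}$ with $n\ge 1$ and $ab\ne 0$, and let $\mathcal{F}_{n,a,b}(x)=x^{2n}+ax^n+b$. Suppose that $\mathcal{F}_{n,a,b}(x)$ is irreducible over $\mathbb{Q}$ and that its Galois group over $\mathbb{Q}$ is abelian. Then $n=2^r3^s$ for some nonnegative integers $r$ and $s$. Furthermore, for every divisor $d\ge 1$ of $n$, the Galois group of $\mathcal{F}_{d,a,b}(x)=x^{2d}+ax^d+b$ over $\mathbb{Q}$ is abelian. *)

theory Defs
  imports Complex_Main "HOL-Computational_Algebra.Computational_Algebra"
begin

definition trinom :: "nat \<Rightarrow> int \<Rightarrow> int \<Rightarrow> rat poly" where
  "trinom n a b = monom 1 (2*n) + monom (of_int a) n + [:of_int b:]"

definition subfield_C :: "complex set \<Rightarrow> bool" where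
  "subfield_C K \<longleftrightarrow> 0 \<in> K \<and> 1 \<in> K \<and>
     (\<forall>x\<in>K. \<forall>y\<in>K. x + y \<in> K \<and> x * y \<in> K) \<and>
     (\<forall>x\<in>K. - x \<in> K \<and> inverse x \<in> K)"

definition splitting_field_C :: "rat poly \<Rightarrow> complex set" where
  "splitting_field_C p =
     \<Inter>{K. subfield_C K \<and> {z. poly (map_poly of_rat p) z = 0} \<subseteq> K}"

text \<open>The Galois group: field automorphisms of the splitting field (extended by the
  identity outside it, so that each automorphism is represented by a unique function).\<close>
definition galois_group_C :: "rat poly \<Rightarrow> (complex \<Rightarrow> complex) set" where
  "galois_group_C p = (let K = splitting_field_C p in
     {\<sigma>. bij_betw \<sigma> K K \<and>
         (\<forall>x\<in>K. \<forall>y\<in>K. \<sigma> (x + y) = \<sigma> x + \<sigma> y \<and> \<sigma> (x * y) = \<sigma> x * \<sigma> y) \<and>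
         (\<forall>x. x \<notin> K \<longrightarrow> \<sigma> x = x)})"

definition galois_abelian :: "rat poly \<Rightarrow> bool" where
  "galois_abelian p \<longleftrightarrow>
     (\<forall>\<sigma>\<in>galois_group_C p. \<forall>\<tau>\<in>galois_group_C p. \<sigma> \<circ> \<tau> = \<tau> \<circ> \<sigma>)"

end

theory Submission
  imports Defs "Berlekamp_Zassenhaus.Factor_Bound"
begin
hide_const (open) up_ring.coeff up_ring.monom

lemma sf_0: "subfield_C E \<Longrightarrow> 0 \<in> E" by (simp add: subfield_C_def)
lemma sf_1: "subfield_C E \<Longrightarrow> 1 \<in> E" by (simp add: subfield_C_def)
lemma sf_add: "subfield_C E \<Longrightarrow> x \<in> E \<Longrightarrow> y \<in> E \<Longrightarrow> x + y \<in> E" by (simp add: subfield_C_def)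
lemma sf_mult: "subfield_C E \<Longrightarrow> x \<in> E \<Longrightarrow> y \<in> E \<Longrightarrow> x * y \<in> E" by (simp add: subfield_C_def)
lemma sf_uminus: "subfield_C E \<Longrightarrow> x \<in> E \<Longrightarrow> - x \<in> E" by (simp add: subfield_C_def)
lemma sf_inverse: "subfield_C E \<Longrightarrow> x \<in> E \<Longrightarrow> inverse x \<in> E" by (simp add: subfield_C_def)
lemma sf_diff: "subfield_C E \<Longrightarrow> x \<in> E \<Longrightarrow> y \<in> E \<Longrightarrow> x - y \<in> E"
  using sf_add[of E x "-y"] sf_uminus[of E y] by simp
lemma sf_divide: "subfield_C E \<Longrightarrow> x \<in> E \<Longrightarrow> y \<in> E \<Longrightarrow> x / y \<in> E"
  using sf_mult[of E x "inverse y"] sf_inverse[of E y] by (simp add: divide_inverse)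
lemma sf_power: "subfield_C E \<Longrightarrow> x \<in> E \<Longrightarrow> x ^ n \<in> E"
  by (induction n) (auto intro: sf_1 sf_mult)
lemma sf_sum: "subfield_C E \<Longrightarrow> (\<And>i. i \<in> A \<Longrightarrow> f i \<in> E) \<Longrightarrow> sum f A \<in> E"
  by (induction A rule: infinite_finite_induct) (auto intro: sf_0 sf_add)
lemma sf_of_nat: "subfield_C E \<Longrightarrow> of_nat n \<in> E"
  by (induction n) (auto intro: sf_0 sf_1 sf_add)
lemma sf_of_int: "subfield_C E \<Longrightarrow> of_int n \<in> E"
proof (cases "n \<ge> 0")
  case True assume "subfield_C E"
  then show ?thesis using True sf_of_nat[of E "nat n"] by simp
next
  case False assume "subfield_C E"
  then show ?thesis using False sf_uminus[OF _ sf_of_nat[of E "nat (-n)"]] by simp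
qed
lemma sf_of_rat: "subfield_C E \<Longrightarrow> of_rat r \<in> E"
proof -
  assume E: "subfield_C E"
  obtain a b where "quotient_of r = (a, b)" by (cases "quotient_of r")
  then have "r = of_int a / of_int b" by (rule quotient_of_div)
  then have "(of_rat r :: complex) = of_int a / of_int b" by (simp add: of_rat_divide)
  then show ?thesis using sf_divide[OF E sf_of_int[OF E] sf_of_int[OF E]] by simp
qed
lemma sf_Rats: "subfield_C E \<Longrightarrow> \<rat> \<subseteq> E"
  using sf_of_rat by (auto elim: Rats_cases)

lemma sf_Rats_is: "subfield_C (\<rat> :: complex set)"
  unfolding subfield_C_def by (auto intro: Rats_add Rats_mult Rats_minus_iff[THEN iffD2] Rats_inverse)

lemma sf_UNIV: "subfield_C (UNIV :: complex set)"
  unfolding subfield_C_def by auto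

lemma sf_Inter: "(\<And>K. K \<in> S \<Longrightarrow> subfield_C K) \<Longrightarrow> subfield_C (\<Inter>S)"
  unfolding subfield_C_def by auto

definition is_hom :: "complex set \<Rightarrow> (complex \<Rightarrow> complex) \<Rightarrow> bool" where
  "is_hom E \<sigma> \<longleftrightarrow> \<sigma> 1 = 1 \<and> (\<forall>x\<in>E. \<forall>y\<in>E. \<sigma> (x + y) = \<sigma> x + \<sigma> y \<and> \<sigma> (x * y) = \<sigma> x * \<sigma> y)"

context
  fixes E \<sigma> assumes E: "subfield_C E" and h: "is_hom E \<sigma>"
begin
lemma hom_add: "x \<in> E \<Longrightarrow> y \<in> E \<Longrightarrow> \<sigma> (x + y) = \<sigma> x + \<sigma> y" using h by (simp add: is_hom_def)
lemma hom_mult: "x \<in> E \<Longrightarrow> y \<in> E \<Longrightarrow> \<sigma> (x * y) = \<sigma> x * \<sigma> y" using h by (simp add: is_hom_def)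
lemma hom_1: "\<sigma> 1 = 1" using h by (simp add: is_hom_def)
lemma hom_0: "\<sigma> 0 = 0" using hom_add[OF sf_0[OF E] sf_0[OF E]] by simp
lemma hom_uminus: "x \<in> E \<Longrightarrow> \<sigma> (- x) = - \<sigma> x"
  using hom_add[of x "-x"] sf_uminus[OF E, of x] hom_0 by (simp add: eq_neg_iff_add_eq_0 add.commute)
lemma hom_diff: "x \<in> E \<Longrightarrow> y \<in> E \<Longrightarrow> \<sigma> (x - y) = \<sigma> x - \<sigma> y"
  using hom_add[of x "-y"] hom_uminus[of y] sf_uminus[OF E, of y] by simp
lemma hom_inverse: "x \<in> E \<Longrightarrow> x \<noteq> 0 \<Longrightarrow> \<sigma> (inverse x) = inverse (\<sigma> x)"
proof -
  assume x: "x \<in> E" "x \<noteq> 0"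
  have "\<sigma> x * \<sigma> (inverse x) = 1" using hom_mult[OF x(1) sf_inverse[OF E x(1)]] x hom_1 by simp
  then show ?thesis by (metis inverse_unique)
qed
lemma hom_nz: "x \<in> E \<Longrightarrow> x \<noteq> 0 \<Longrightarrow> \<sigma> x \<noteq> 0"
proof -
  assume x: "x \<in> E" "x \<noteq> 0"
  have "\<sigma> x * \<sigma> (inverse x) = 1" using hom_mult[OF x(1) sf_inverse[OF E x(1)]] x hom_1 by simp
  then show ?thesis by auto
qed
lemma hom_inj: "inj_on \<sigma> E"
proof (rule inj_onI)
  fix x y assume "x \<in> E" "y \<in> E" "\<sigma> x = \<sigma> y"
  then have "\<sigma> (x - y) = 0" using hom_diff by simp
  then show "x = y" using hom_nz[of "x-y"] sf_diff[OF E] \<open>x\<in>E\<close> \<open>y\<in>E\<close> by auto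
qed
lemma hom_divide: "x \<in> E \<Longrightarrow> y \<in> E \<Longrightarrow> \<sigma> (x / y) = \<sigma> x / \<sigma> y"
  by (cases "y = 0") (simp_all add: divide_inverse hom_mult hom_inverse sf_inverse[OF E] hom_0)
lemma hom_power: "x \<in> E \<Longrightarrow> \<sigma> (x ^ n) = \<sigma> x ^ n"
  by (induction n) (simp_all add: hom_1 hom_mult sf_power[OF E])
lemma hom_sum: "(\<And>i. i \<in> A \<Longrightarrow> f i \<in> E) \<Longrightarrow> \<sigma> (sum f A) = (\<Sum>i\<in>A. \<sigma> (f i))"
proof (induction A rule: infinite_finite_induct)
  case (insert x F)
  then show ?case by (simp add: hom_add sf_sum[OF E])
qed (simp_all add: hom_0)
lemma hom_of_nat: "\<sigma> (of_nat n) = of_nat n"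
  by (induction n) (simp_all add: hom_0 hom_1 hom_add sf_of_nat[OF E] sf_1[OF E])
lemma hom_of_int: "\<sigma> (of_int n) = of_int n"
proof (cases "n \<ge> 0")
  case True then show ?thesis using hom_of_nat[of "nat n"] by simp
next
  case False then show ?thesis using hom_uminus[OF sf_of_nat[OF E, of "nat (-n)"]] hom_of_nat[of "nat (-n)"] by simp
qed
lemma hom_of_rat: "\<sigma> (of_rat r) = of_rat r"
proof -
  obtain a b where "quotient_of r = (a, b)" by (cases "quotient_of r")
  then have "r = of_int a / of_int b" by (rule quotient_of_div)
  then have "(of_rat r :: complex) = of_int a / of_int b" by (simp add: of_rat_divide)
  then show ?thesis using hom_divide[OF sf_of_int[OF E] sf_of_int[OF E]] hom_of_int by simp
qed
end


definition Epoly :: "complex set \<Rightarrow> complex poly \<Rightarrow> bool" where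
  "Epoly E f \<longleftrightarrow> (\<forall>i. coeff f i \<in> E)"


definition alg :: "complex set \<Rightarrow> complex \<Rightarrow> bool" where
  "alg E \<alpha> \<longleftrightarrow> (\<exists>f. Epoly E f \<and> f \<noteq> 0 \<and> poly f \<alpha> = 0)"

definition minp :: "complex set \<Rightarrow> complex \<Rightarrow> complex poly" where
  "minp E \<alpha> = (SOME f. Epoly E f \<and> f \<noteq> 0 \<and> poly f \<alpha> = 0 \<and>
      degree f = (LEAST n. \<exists>f. Epoly E f \<and> f \<noteq> 0 \<and> poly f \<alpha> = 0 \<and> degree f = n))"

definition adjoin :: "complex set \<Rightarrow> complex \<Rightarrow> complex set" where
  "adjoin E \<alpha> = {poly f \<alpha> | f. Epoly E f}"

definition extd :: "complex set \<Rightarrow> (complex \<Rightarrow> complex) \<Rightarrow> complex \<Rightarrow> complex \<Rightarrow> complex \<Rightarrow> complex" where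
  "extd E \<sigma> \<alpha> \<beta> x = (SOME y. \<exists>f. Epoly E f \<and> x = poly f \<alpha> \<and> y = poly (map_poly \<sigma> f) \<beta>)"

context fixes E assumes E: "subfield_C E"
begin
lemma Epoly_0: "Epoly E 0" using sf_0[OF E] by (simp add: Epoly_def)
lemma Epoly_const: "c \<in> E \<Longrightarrow> Epoly E [:c:]" using sf_0[OF E] by (simp add: Epoly_def coeff_pCons split: nat.split)
lemma Epoly_X: "Epoly E [:0,1:]" using sf_0[OF E] sf_1[OF E] by (simp add: Epoly_def coeff_pCons split: nat.split)
lemma Epoly_add: "Epoly E f \<Longrightarrow> Epoly E g \<Longrightarrow> Epoly E (f + g)" using sf_add[OF E] by (simp add: Epoly_def)
lemma Epoly_uminus: "Epoly E f \<Longrightarrow> Epoly E (- f)" using sf_uminus[OF E] by (simp add: Epoly_def)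
lemma Epoly_diff: "Epoly E f \<Longrightarrow> Epoly E g \<Longrightarrow> Epoly E (f - g)" using sf_diff[OF E] by (simp add: Epoly_def)
lemma Epoly_mult: "Epoly E f \<Longrightarrow> Epoly E g \<Longrightarrow> Epoly E (f * g)"
  unfolding Epoly_def coeff_mult by (auto intro!: sf_sum[OF E] sf_mult[OF E])
lemma Epoly_monom: "c \<in> E \<Longrightarrow> Epoly E (monom c n)" using sf_0[OF E] by (simp add: Epoly_def coeff_monom)
lemma Epoly_rat: "Epoly E (map_poly of_rat q)" using sf_of_rat[OF E] by (simp add: Epoly_def coeff_map_poly)

lemma poly_in: "Epoly E f \<Longrightarrow> subfield_C L \<Longrightarrow> E \<subseteq> L \<Longrightarrow> x \<in> L \<Longrightarrow> poly f x \<in> L"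
  unfolding poly_altdef Epoly_def by (auto intro!: sf_sum sf_mult sf_power)

lemma Epoly_div:
  assumes "Epoly E f" "Epoly E g" "g \<noteq> 0"
  shows "\<exists>q r. Epoly E q \<and> Epoly E r \<and> f = q * g + r \<and> (r = 0 \<or> degree r < degree g)"
  using assms(1)
proof (induction "degree f" arbitrary: f rule: less_induct)
  case less
  show ?case
  proof (cases "f = 0 \<or> degree f < degree g")
    case True
    then show ?thesis using less.prems Epoly_0 by (intro exI[of _ 0] exI[of _ f]) auto
  next
    case False
    then have f0: "f \<noteq> 0" and dg: "degree g \<le> degree f" by auto
    define c where "c = lead_coeff f / lead_coeff g"
    define k where "k = degree f - degree g"
    define f' where "f' = f - monom c k * g"
    have cE: "c \<in> E" unfolding c_def using less.prems assms(2) by (auto simp: Epoly_def intro: sf_divide[OF E])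
    have Ef': "Epoly E f'" unfolding f'_def by (intro Epoly_diff less.prems Epoly_mult Epoly_monom cE assms(2))
    have lg: "lead_coeff g \<noteq> 0" using assms(3) by simp
    have cz: "coeff f' i = 0" if "i \<ge> degree f" for i
    proof (cases "i = degree f")
      case True
      then have "i - k = degree g" using dg k_def by simp
      then show ?thesis unfolding f'_def using True lg dg k_def by (simp add: coeff_monom_mult c_def)
    next
      case False
      then have "i > degree f" using that by simp
      then have "coeff f i = 0" "coeff g (i - k) = 0" using dg k_def by (auto intro: coeff_eq_0)
      then show ?thesis unfolding f'_def by (simp add: coeff_monom_mult)
    qed
    have df': "f' = 0 \<or> degree f' < degree f"
    proof (cases "degree f = 0")
      case True
      then have "\<forall>i. coeff f' i = 0" using cz by simp
      then show ?thesis by (simp add: poly_eq_iff)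
    next
      case False
      have "degree f' \<le> degree f - 1" by (rule degree_le) (use cz False in auto)
      then show ?thesis using False by arith
    qed
    show ?thesis
    proof (cases "f' = 0")
      case True
      then show ?thesis using Epoly_monom[OF cE, of k] Epoly_0 unfolding f'_def
        by (intro exI[of _ "monom c k"] exI[of _ 0]) auto
    next
      case False
      with df' have "degree f' < degree f" by simp
      from less.hyps[OF this Ef'] obtain q r where qr: "Epoly E q" "Epoly E r" "f' = q * g + r" "r = 0 \<or> degree r < degree g" by blast
      have "f = (q + monom c k) * g + r" using qr(3) unfolding f'_def by (simp add: algebra_simps)
      then show ?thesis using qr Epoly_add[OF qr(1) Epoly_monom[OF cE]] by blast
    qed
  qed
qed

section \<open>Minimal polynomials\<close>

lemma minp:
  assumes "alg E \<alpha>"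
  shows "Epoly E (minp E \<alpha>)" "minp E \<alpha> \<noteq> 0" "poly (minp E \<alpha>) \<alpha> = 0"
    "\<And>f. Epoly E f \<Longrightarrow> f \<noteq> 0 \<Longrightarrow> poly f \<alpha> = 0 \<Longrightarrow> degree (minp E \<alpha>) \<le> degree f"
proof -
  let ?P = "\<lambda>n. \<exists>f. Epoly E f \<and> f \<noteq> 0 \<and> poly f \<alpha> = 0 \<and> degree f = n"
  have ex: "\<exists>n. ?P n" using assms unfolding alg_def by blast
  have "?P (Least ?P)" by (rule LeastI_ex[OF ex])
  then have *: "Epoly E (minp E \<alpha>) \<and> minp E \<alpha> \<noteq> 0 \<and> poly (minp E \<alpha>) \<alpha> = 0 \<and> degree (minp E \<alpha>) = Least ?P"
    unfolding minp_def by (rule someI_ex)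
  then show "Epoly E (minp E \<alpha>)" "minp E \<alpha> \<noteq> 0" "poly (minp E \<alpha>) \<alpha> = 0" by auto
  fix f assume "Epoly E f" "f \<noteq> 0" "poly f \<alpha> = 0"
  then have "Least ?P \<le> degree f" by (intro Least_le) auto
  then show "degree (minp E \<alpha>) \<le> degree f" using * by simp
qed

lemma minp_deg: "alg E \<alpha> \<Longrightarrow> degree (minp E \<alpha>) > 0"
proof (rule ccontr)
  assume a: "alg E \<alpha>" "\<not> degree (minp E \<alpha>) > 0"
  then obtain c where "minp E \<alpha> = [:c:]" by (metis degree_eq_zeroE neq0_conv)
  then show False using minp[OF a(1)] by auto
qed

lemma minp_dvd:
  assumes "alg E \<alpha>" "Epoly E g" "poly g \<alpha> = 0"
  shows "\<exists>q. Epoly E q \<and> g = q * minp E \<alpha>"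
proof -
  obtain q r where qr: "Epoly E q" "Epoly E r" "g = q * minp E \<alpha> + r" "r = 0 \<or> degree r < degree (minp E \<alpha>)"
    using Epoly_div[OF assms(2) minp(1,2)[OF assms(1)]] by blast
  have "poly r \<alpha> = 0" using qr(3) assms(3) minp(3)[OF assms(1)] by simp
  then have "r = 0" using qr(2,4) minp(4)[OF assms(1) qr(2)] by force
  then show ?thesis using qr by auto
qed

lemma inv_aux:
  assumes a: "alg E \<alpha>"
  shows "Epoly E f \<Longrightarrow> poly f \<alpha> \<noteq> 0 \<Longrightarrow> degree f < degree (minp E \<alpha>) \<Longrightarrow> \<exists>u. Epoly E u \<and> poly u \<alpha> * poly f \<alpha> = 1"
proof (induction "degree f" arbitrary: f rule: less_induct)
  case less
  let ?m = "minp E \<alpha>"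
  show ?case
  proof (cases "degree f = 0")
    case True
    then obtain c where c: "f = [:c:]" by (metis degree_eq_zeroE)
    then have "c \<in> E" "c \<noteq> 0" using less.prems by (auto simp: Epoly_def dest: spec[of _ 0])
    then show ?thesis using c by (intro exI[of _ "[:inverse c:]"]) (auto intro: Epoly_const sf_inverse[OF E])
  next
    case False
    have f0: "f \<noteq> 0" using less.prems by auto
    obtain q r where qr: "Epoly E q" "Epoly E r" "?m = q * f + r" "r = 0 \<or> degree r < degree f"
      using Epoly_div[OF minp(1)[OF a] less.prems(1) f0] by blast
    have ev: "poly q \<alpha> * poly f \<alpha> + poly r \<alpha> = 0" using qr(3) minp(3)[OF a] by (metis poly_add poly_mult)
    have q0: "q \<noteq> 0" using qr(3,4) less.prems(3) minp(2)[OF a] False by auto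
    have "degree ?m = degree (q * f)"
    proof -
      have "degree (q * f) = degree q + degree f" using q0 f0 by (rule degree_mult_eq)
      then have "r = 0 \<or> degree r < degree (q * f)" using qr(4) by auto
      then show ?thesis using qr(3) by (auto simp: degree_add_eq_left)
    qed
    then have dq: "degree q < degree ?m" using q0 f0 False by (simp add: degree_mult_eq)
    have r0: "poly r \<alpha> \<noteq> 0"
    proof
      assume "poly r \<alpha> = 0"
      then have "poly q \<alpha> = 0" using ev less.prems(2) by simp
      then show False using minp(4)[OF a qr(1) q0] dq by simp
    qed
    then have "r \<noteq> 0" by auto
    then have "degree r < degree f" using qr(4) by simp
    then obtain u where u: "Epoly E u" "poly u \<alpha> * poly r \<alpha> = 1"
      using less.hyps[OF _ qr(2) r0] less.prems(3) by force
    have rr: "poly r \<alpha> = - (poly q \<alpha> * poly f \<alpha>)" using ev by (simp add: eq_neg_iff_add_eq_0 add.commute)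
    have "poly (- (u * q)) \<alpha> * poly f \<alpha> = 1" using u(2) rr by (simp add: algebra_simps)
    then show ?thesis using Epoly_uminus[OF Epoly_mult[OF u(1) qr(1)]] by blast
  qed
qed

lemma adjoin_E: "E \<subseteq> adjoin E \<alpha>"
  unfolding adjoin_def using Epoly_const by (auto intro!: exI[of _ "[:_:]"])
lemma adjoin_alpha: "\<alpha> \<in> adjoin E \<alpha>"
  unfolding adjoin_def using Epoly_X by (auto intro!: exI[of _ "[:0,1:]"])
lemma adjoin_min: "subfield_C L \<Longrightarrow> E \<subseteq> L \<Longrightarrow> \<alpha> \<in> L \<Longrightarrow> adjoin E \<alpha> \<subseteq> L"
  unfolding adjoin_def using poly_in by auto

lemma adjoin_subfield:
  assumes a: "alg E \<alpha>" shows "subfield_C (adjoin E \<alpha>)"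
  unfolding subfield_C_def
proof (intro conjI ballI)
  show "0 \<in> adjoin E \<alpha>" "1 \<in> adjoin E \<alpha>" using adjoin_E sf_0[OF E] sf_1[OF E] by auto
  fix x y assume x: "x \<in> adjoin E \<alpha>" and y: "y \<in> adjoin E \<alpha>"
  from x obtain f where f: "Epoly E f" "x = poly f \<alpha>" unfolding adjoin_def by auto
  from y obtain g where g: "Epoly E g" "y = poly g \<alpha>" unfolding adjoin_def by auto
  show "x + y \<in> adjoin E \<alpha>" unfolding adjoin_def using f g Epoly_add[OF f(1) g(1)] by (auto intro!: exI[of _ "f+g"])
  show "x * y \<in> adjoin E \<alpha>" unfolding adjoin_def using f g Epoly_mult[OF f(1) g(1)] by (auto intro!: exI[of _ "f*g"])
next
  fix x assume x: "x \<in> adjoin E \<alpha>"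
  from x obtain f where f: "Epoly E f" "x = poly f \<alpha>" unfolding adjoin_def by auto
  show "- x \<in> adjoin E \<alpha>" unfolding adjoin_def using f Epoly_uminus[OF f(1)] by (auto intro!: exI[of _ "-f"])
  show "inverse x \<in> adjoin E \<alpha>"
  proof (cases "x = 0")
    case True then show ?thesis using x by simp
  next
    case False
    obtain q r where qr: "Epoly E q" "Epoly E r" "f = q * minp E \<alpha> + r" "r = 0 \<or> degree r < degree (minp E \<alpha>)"
      using Epoly_div[OF f(1) minp(1,2)[OF a]] by blast
    have rx: "poly r \<alpha> = x" using qr(3) f(2) minp(3)[OF a] by simp
    have "degree r < degree (minp E \<alpha>)" using qr(4) minp_deg[OF a] by auto
    then obtain u where u: "Epoly E u" "poly u \<alpha> * poly r \<alpha> = 1" using inv_aux[OF a qr(2)] rx False by auto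
    then have "inverse x = poly u \<alpha>" using rx by (metis inverse_unique mult.commute)
    then show ?thesis unfolding adjoin_def using u(1) by auto
  qed
qed

end

context
  fixes E \<sigma> assumes E: "subfield_C E" and h: "is_hom E \<sigma>"
begin

lemma mp_coeff: "coeff (map_poly \<sigma> f) i = \<sigma> (coeff f i)"
  using hom_0[OF E h] by (simp add: coeff_map_poly)

lemma mp_add: "Epoly E f \<Longrightarrow> Epoly E g \<Longrightarrow> map_poly \<sigma> (f + g) = map_poly \<sigma> f + map_poly \<sigma> g"
  by (simp add: poly_eq_iff mp_coeff hom_add[OF E h] Epoly_def)

lemma mp_diff: "Epoly E f \<Longrightarrow> Epoly E g \<Longrightarrow> map_poly \<sigma> (f - g) = map_poly \<sigma> f - map_poly \<sigma> g"
  by (simp add: poly_eq_iff mp_coeff hom_diff[OF E h] Epoly_def)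

lemma mp_mult: "Epoly E f \<Longrightarrow> Epoly E g \<Longrightarrow> map_poly \<sigma> (f * g) = map_poly \<sigma> f * map_poly \<sigma> g"
  unfolding poly_eq_iff mp_coeff coeff_mult
  by (subst hom_sum[OF E h]) (auto simp: Epoly_def hom_mult[OF E h] intro!: sf_mult[OF E] sum.cong)

lemma mp_const: "c \<in> E \<Longrightarrow> map_poly \<sigma> [:c:] = [:\<sigma> c:]"
  by (simp add: poly_eq_iff mp_coeff hom_0[OF E h] coeff_pCons split: nat.split)

lemma mp_X: "map_poly \<sigma> [:0,1:] = [:0,1:]"
  by (simp add: poly_eq_iff mp_coeff hom_0[OF E h] hom_1[OF E h] coeff_pCons split: nat.split)

lemma mp_rat: "map_poly \<sigma> (map_poly of_rat q) = map_poly of_rat q"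
  by (simp add: poly_eq_iff mp_coeff coeff_map_poly hom_of_rat[OF E h])

lemma mp_degree: "Epoly E f \<Longrightarrow> degree (map_poly \<sigma> f) = degree f"
proof -
  assume f: "Epoly E f"
  have nz: "coeff (map_poly \<sigma> f) i \<noteq> 0 \<longleftrightarrow> coeff f i \<noteq> 0" for i
    using hom_nz[OF E h, of "coeff f i"] f hom_0[OF E h] by (auto simp: mp_coeff Epoly_def)
  show ?thesis
  proof (rule antisym)
    show "degree (map_poly \<sigma> f) \<le> degree f" by (rule degree_le) (auto simp: mp_coeff hom_0[OF E h] coeff_eq_0)
    show "degree f \<le> degree (map_poly \<sigma> f)"
    proof (cases "f = 0")
      case False
      then show ?thesis by (intro le_degree) (simp add: nz)
    qed simp
  qed
qed

lemma mp_poly: "Epoly E f \<Longrightarrow> x \<in> E \<Longrightarrow> poly (map_poly \<sigma> f) (\<sigma> x) = \<sigma> (poly f x)"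
proof -
  assume f: "Epoly E f" and x: "x \<in> E"
  have "(\<Sum>i\<le>degree (map_poly \<sigma> f). coeff (map_poly \<sigma> f) i * \<sigma> x ^ i) = (\<Sum>i\<le>degree f. \<sigma> (coeff f i * x ^ i))"
    using f x by (intro sum.cong) (auto simp: mp_degree mp_coeff Epoly_def hom_mult[OF E h] hom_power[OF E h] sf_power[OF E])
  also have "\<dots> = \<sigma> (\<Sum>i\<le>degree f. coeff f i * x ^ i)"
    using f x by (intro hom_sum[OF E h, symmetric]) (auto simp: Epoly_def intro!: sf_mult[OF E] sf_power[OF E])
  finally show ?thesis by (simp add: poly_altdef)
qed

context
  fixes \<alpha> \<beta> assumes a: "alg E \<alpha>" and b: "poly (map_poly \<sigma> (minp E \<alpha>)) \<beta> = 0"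
begin

lemma ext_wd:
  assumes f: "Epoly E f" and g: "Epoly E g" and fg: "poly f \<alpha> = poly g \<alpha>"
  shows "poly (map_poly \<sigma> f) \<beta> = poly (map_poly \<sigma> g) \<beta>"
proof -
  have "poly (f - g) \<alpha> = 0" using fg by simp
  then obtain q where q: "Epoly E q" "f - g = q * minp E \<alpha>" using minp_dvd[OF E a Epoly_diff[OF E f g]] by blast
  have "map_poly \<sigma> f - map_poly \<sigma> g = map_poly \<sigma> q * map_poly \<sigma> (minp E \<alpha>)"
    using mp_diff[OF f g] mp_mult[OF q(1) minp(1)[OF E a]] q(2) by simp
  then have "poly (map_poly \<sigma> f) \<beta> - poly (map_poly \<sigma> g) \<beta> = 0" using b by (metis poly_diff poly_mult mult_zero_right)
  then show ?thesis by simp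
qed

lemma ext_eval: "Epoly E f \<Longrightarrow> extd E \<sigma> \<alpha> \<beta> (poly f \<alpha>) = poly (map_poly \<sigma> f) \<beta>"
proof -
  assume f: "Epoly E f"
  have "\<exists>g. Epoly E g \<and> poly f \<alpha> = poly g \<alpha> \<and> extd E \<sigma> \<alpha> \<beta> (poly f \<alpha>) = poly (map_poly \<sigma> g) \<beta>"
    unfolding extd_def by (rule someI_ex) (use f in blast)
  then obtain g where "Epoly E g" "poly f \<alpha> = poly g \<alpha>" "extd E \<sigma> \<alpha> \<beta> (poly f \<alpha>) = poly (map_poly \<sigma> g) \<beta>" by blast
  then show ?thesis using ext_wd[OF f] by metis
qed

lemma ext_hom: "is_hom (adjoin E \<alpha>) (extd E \<sigma> \<alpha> \<beta>)"
  unfolding is_hom_def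
proof (intro conjI ballI)
  have "extd E \<sigma> \<alpha> \<beta> (poly [:1:] \<alpha>) = poly (map_poly \<sigma> [:1:]) \<beta>" by (rule ext_eval[OF Epoly_const[OF E sf_1[OF E]]])
  then show "extd E \<sigma> \<alpha> \<beta> 1 = 1" using mp_const[OF sf_1[OF E]] hom_1[OF E h] by simp
  fix x y assume x: "x \<in> adjoin E \<alpha>" and y: "y \<in> adjoin E \<alpha>"
  from x obtain f where f: "Epoly E f" "x = poly f \<alpha>" by (auto simp: adjoin_def)
  from y obtain g where g: "Epoly E g" "y = poly g \<alpha>" by (auto simp: adjoin_def)
  have "extd E \<sigma> \<alpha> \<beta> (x + y) = extd E \<sigma> \<alpha> \<beta> (poly (f + g) \<alpha>)" using f g by simp
  also have "\<dots> = poly (map_poly \<sigma> (f + g)) \<beta>" by (rule ext_eval[OF Epoly_add[OF E f(1) g(1)]])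
  also have "\<dots> = extd E \<sigma> \<alpha> \<beta> x + extd E \<sigma> \<alpha> \<beta> y" using ext_eval[OF f(1)] ext_eval[OF g(1)] f g mp_add[OF f(1) g(1)] by simp
  finally show "extd E \<sigma> \<alpha> \<beta> (x + y) = extd E \<sigma> \<alpha> \<beta> x + extd E \<sigma> \<alpha> \<beta> y" .
  have "extd E \<sigma> \<alpha> \<beta> (x * y) = extd E \<sigma> \<alpha> \<beta> (poly (f * g) \<alpha>)" using f g by simp
  also have "\<dots> = poly (map_poly \<sigma> (f * g)) \<beta>" by (rule ext_eval[OF Epoly_mult[OF E f(1) g(1)]])
  also have "\<dots> = extd E \<sigma> \<alpha> \<beta> x * extd E \<sigma> \<alpha> \<beta> y" using ext_eval[OF f(1)] ext_eval[OF g(1)] f g mp_mult[OF f(1) g(1)] by simp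
  finally show "extd E \<sigma> \<alpha> \<beta> (x * y) = extd E \<sigma> \<alpha> \<beta> x * extd E \<sigma> \<alpha> \<beta> y" .
qed

lemma ext_on_E: "x \<in> E \<Longrightarrow> extd E \<sigma> \<alpha> \<beta> x = \<sigma> x"
  using ext_eval[OF Epoly_const[OF E], of x] mp_const[of x] by simp

lemma ext_alpha: "extd E \<sigma> \<alpha> \<beta> \<alpha> = \<beta>"
  using ext_eval[OF Epoly_X[OF E]] mp_X by simp

end
end


lemma alg_rat:
  assumes "subfield_C E" "p \<noteq> 0" "poly (map_poly of_rat p) x = 0"
  shows "alg E x"
proof -
  have "map_poly of_rat p \<noteq> (0 :: complex poly)" using assms(2) by (auto simp: poly_eq_iff coeff_map_poly)
  then show ?thesis unfolding alg_def using assms Epoly_rat[OF assms(1)] by blast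
qed


section \<open>Extending homomorphisms to splitting fields\<close>

lemma ext_fin:
  assumes "finite S" and E: "subfield_C E" and h: "is_hom E \<sigma>"
    and S: "\<forall>s\<in>S. \<exists>P::rat poly. P \<noteq> 0 \<and> poly (map_poly of_rat P) s = 0"
  shows "\<exists>E' \<sigma>'. subfield_C E' \<and> E \<subseteq> E' \<and> S \<subseteq> E' \<and> (\<forall>L. subfield_C L \<and> E \<subseteq> L \<and> S \<subseteq> L \<longrightarrow> E' \<subseteq> L)
     \<and> is_hom E' \<sigma>' \<and> (\<forall>x\<in>E. \<sigma>' x = \<sigma> x)"
  using assms(1,4)
proof (induction S rule: finite_induct)
  case empty
  then show ?case using E h by (intro exI[of _ E] exI[of _ \<sigma>]) auto
next
  case (insert s S)
  then obtain E1 \<sigma>1 where E1: "subfield_C E1" "E \<subseteq> E1" "S \<subseteq> E1" "\<forall>L. subfield_C L \<and> E \<subseteq> L \<and> S \<subseteq> L \<longrightarrow> E1 \<subseteq> L"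
    "is_hom E1 \<sigma>1" "\<forall>x\<in>E. \<sigma>1 x = \<sigma> x" by auto
  obtain P :: "rat poly" where P: "P \<noteq> 0" "poly (map_poly of_rat P) s = 0" using insert.prems by auto
  have a: "alg E1 s" by (rule alg_rat[OF E1(1) P])
  have "degree (map_poly \<sigma>1 (minp E1 s)) > 0"
    using mp_degree[OF E1(1) E1(5) minp(1)[OF E1(1) a]] minp_deg[OF E1(1) a] by simp
  then obtain \<beta> where b: "poly (map_poly \<sigma>1 (minp E1 s)) \<beta> = 0" using alg_closed_imp_poly_has_root by blast
  show ?case
  proof (intro exI conjI allI impI ballI)
    show "subfield_C (adjoin E1 s)" by (rule adjoin_subfield[OF E1(1) a])
    show "E \<subseteq> adjoin E1 s" using E1(2) adjoin_E[OF E1(1)] by blast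
    show "insert s S \<subseteq> adjoin E1 s" using E1(3) adjoin_E[OF E1(1)] adjoin_alpha[OF E1(1)] by blast
    show "is_hom (adjoin E1 s) (extd E1 \<sigma>1 s \<beta>)" by (rule ext_hom[OF E1(1) E1(5) a b])
    fix L assume L: "subfield_C L \<and> E \<subseteq> L \<and> insert s S \<subseteq> L"
    then have "E1 \<subseteq> L" using E1(4) by auto
    then show "adjoin E1 s \<subseteq> L" using adjoin_min[OF E1(1)] L by auto
  next
    fix x assume "x \<in> E"
    then show "extd E1 \<sigma>1 s \<beta> x = \<sigma> x" using ext_on_E[OF E1(1) E1(5) a b] E1(2,6) by auto
  qed
qed

definition roots_of :: "rat poly \<Rightarrow> complex set" where
  "roots_of P = {z. poly (map_poly of_rat P) z = 0}"

lemma spl_subfield: "subfield_C (splitting_field_C P)"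
  unfolding splitting_field_C_def by (rule sf_Inter) auto

lemma spl_roots: "roots_of P \<subseteq> splitting_field_C P"
  unfolding splitting_field_C_def roots_of_def by auto

lemma spl_min: "subfield_C L \<Longrightarrow> roots_of P \<subseteq> L \<Longrightarrow> splitting_field_C P \<subseteq> L"
  unfolding splitting_field_C_def roots_of_def by auto

lemma roots_finite: "P \<noteq> 0 \<Longrightarrow> finite (roots_of P)"
proof -
  assume "P \<noteq> 0"
  then have "map_poly of_rat P \<noteq> (0 :: complex poly)" by (auto simp: poly_eq_iff coeff_map_poly)
  then show ?thesis unfolding roots_of_def by (rule poly_roots_finite)
qed

lemma key_ext:
  assumes P: "P \<noteq> 0" and E: "subfield_C E" "E \<subseteq> splitting_field_C P" and h: "is_hom E \<sigma>"
  shows "\<exists>g\<in>galois_group_C P. \<forall>x\<in>E. g x = \<sigma> x"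
proof -
  define K where "K = splitting_field_C P"
  define S where "S = roots_of P"
  have K: "subfield_C K" unfolding K_def by (rule spl_subfield)
  have SK: "S \<subseteq> K" unfolding K_def S_def by (rule spl_roots)
  have finS: "finite S" unfolding S_def by (rule roots_finite[OF P])
  have "\<forall>s\<in>S. \<exists>P::rat poly. P \<noteq> 0 \<and> poly (map_poly of_rat P) s = 0" using P unfolding S_def roots_of_def by auto
  from ext_fin[OF finS E(1) h this] obtain E' \<sigma>' where E': "subfield_C E'" "E \<subseteq> E'" "S \<subseteq> E'"
    "\<forall>L. subfield_C L \<and> E \<subseteq> L \<and> S \<subseteq> L \<longrightarrow> E' \<subseteq> L" "is_hom E' \<sigma>'" "\<forall>x\<in>E. \<sigma>' x = \<sigma> x" by blast
  have "E' = K"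
  proof
    show "E' \<subseteq> K" using E'(4) K SK E(2) unfolding K_def by auto
    show "K \<subseteq> E'" unfolding K_def S_def by (rule spl_min[OF E'(1)]) (use E'(3) S_def in auto)
  qed
  then have hK: "is_hom K \<sigma>'" using E'(5) by simp
  have inj: "inj_on \<sigma>' K" by (rule hom_inj[OF K hK])
  have mapS: "\<sigma>' s \<in> S" if "s \<in> S" for s
  proof -
    have sK: "s \<in> K" using that SK by auto
    have "poly (map_poly of_rat P) (\<sigma>' s) = poly (map_poly \<sigma>' (map_poly of_rat P)) (\<sigma>' s)"
      by (simp add: mp_rat[OF K hK])
    also have "\<dots> = \<sigma>' (poly (map_poly of_rat P) s)" by (rule mp_poly[OF K hK Epoly_rat[OF K] sK])
    also have "\<dots> = 0" using that hom_0[OF K hK] unfolding S_def roots_of_def by simp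
    finally show ?thesis unfolding S_def roots_of_def by simp
  qed
  have imS: "\<sigma>' ` S = S"
  proof (rule endo_inj_surj[OF finS])
    show "\<sigma>' ` S \<subseteq> S" using mapS by blast
    show "inj_on \<sigma>' S" using inj SK by (rule inj_on_subset)
  qed
  define Pre where "Pre = {x\<in>K. \<sigma>' x \<in> K}"
  have "subfield_C Pre"
    unfolding subfield_C_def Pre_def
  proof (intro conjI ballI)
    show "0 \<in> {x \<in> K. \<sigma>' x \<in> K}" using hom_0[OF K hK] sf_0[OF K] by simp
    show "1 \<in> {x \<in> K. \<sigma>' x \<in> K}" using hom_1[OF K hK] sf_1[OF K] by simp
    fix x y assume x: "x \<in> {x \<in> K. \<sigma>' x \<in> K}" and y: "y \<in> {x \<in> K. \<sigma>' x \<in> K}"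
    show "x + y \<in> {x \<in> K. \<sigma>' x \<in> K}" using x y by (auto simp: hom_add[OF K hK] intro: sf_add[OF K])
    show "x * y \<in> {x \<in> K. \<sigma>' x \<in> K}" using x y by (auto simp: hom_mult[OF K hK] intro: sf_mult[OF K])
  next
    fix x assume x: "x \<in> {x \<in> K. \<sigma>' x \<in> K}"
    show "- x \<in> {x \<in> K. \<sigma>' x \<in> K}" using x by (auto simp: hom_uminus[OF K hK] intro: sf_uminus[OF K])
    show "inverse x \<in> {x \<in> K. \<sigma>' x \<in> K}"
      using x by (cases "x = 0") (auto simp: hom_inverse[OF K hK] intro: sf_inverse[OF K])
  qed
  moreover have "roots_of P \<subseteq> Pre" using mapS SK unfolding Pre_def S_def by auto
  ultimately have "K \<subseteq> Pre" unfolding K_def by (rule spl_min)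
  then have into: "\<sigma>' ` K \<subseteq> K" unfolding Pre_def by auto
  have "subfield_C (\<sigma>' ` K)"
    unfolding subfield_C_def
  proof (intro conjI ballI)
    show "0 \<in> \<sigma>' ` K" using hom_0[OF K hK] sf_0[OF K] by (metis image_eqI)
    show "1 \<in> \<sigma>' ` K" using hom_1[OF K hK] sf_1[OF K] by (metis image_eqI)
    fix x y assume x: "x \<in> \<sigma>' ` K" and y: "y \<in> \<sigma>' ` K"
    then obtain u v where uv: "u \<in> K" "v \<in> K" "x = \<sigma>' u" "y = \<sigma>' v" by auto
    show "x + y \<in> \<sigma>' ` K" using uv hom_add[OF K hK uv(1,2)] sf_add[OF K uv(1,2)] by (metis image_eqI)
    show "x * y \<in> \<sigma>' ` K" using uv hom_mult[OF K hK uv(1,2)] sf_mult[OF K uv(1,2)] by (metis image_eqI)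
  next
    fix x assume x: "x \<in> \<sigma>' ` K"
    then obtain u where u: "u \<in> K" "x = \<sigma>' u" by auto
    show "- x \<in> \<sigma>' ` K" using u hom_uminus[OF K hK u(1)] sf_uminus[OF K u(1)] by (metis image_eqI)
    show "inverse x \<in> \<sigma>' ` K"
    proof (cases "u = 0")
      case True then show ?thesis using u x hom_0[OF K hK] by simp
    next
      case False then show ?thesis using u hom_inverse[OF K hK u(1)] sf_inverse[OF K u(1)] by (metis image_eqI)
    qed
  qed
  moreover have "roots_of P \<subseteq> \<sigma>' ` K" using imS SK unfolding S_def by auto
  ultimately have "K \<subseteq> \<sigma>' ` K" unfolding K_def by (rule spl_min)
  with into have imK: "\<sigma>' ` K = K" by blast
  define g where "g = (\<lambda>x. if x \<in> K then \<sigma>' x else x)"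
  have gK: "\<And>x. x \<in> K \<Longrightarrow> g x = \<sigma>' x" unfolding g_def by simp
  have "g \<in> galois_group_C P"
    unfolding galois_group_C_def Let_def K_def[symmetric]
  proof (intro CollectI conjI ballI allI impI)
    have "inj_on g K" using inj inj_on_cong[of K g \<sigma>'] gK by blast
    moreover have "g ` K = K" using imK gK by (metis image_cong)
    ultimately show "bij_betw g K K" by (simp add: bij_betw_def)
    fix x y assume "x \<in> K" "y \<in> K"
    then show "g (x + y) = g x + g y" "g (x * y) = g x * g y"
      using gK sf_add[OF K] sf_mult[OF K] hom_add[OF K hK] hom_mult[OF K hK] by auto
  next
    fix x assume "x \<notin> K" then show "g x = x" unfolding g_def by simp
  qed
  moreover have "\<forall>x\<in>E. g x = \<sigma> x" using gK E'(6) E(2) unfolding K_def by auto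
  ultimately show ?thesis by blast
qed




section \<open>Basic facts on the Galois group\<close>

lemma ratmap_mult: "map_poly (of_rat :: rat \<Rightarrow> complex) (p * q) = map_poly of_rat p * map_poly of_rat q"
  by (simp add: poly_eq_iff coeff_map_poly coeff_mult of_rat_sum of_rat_mult)

lemma ratmap_const: "map_poly (of_rat :: rat \<Rightarrow> complex) [:c:] = [:of_rat c:]"
  by (simp add: poly_eq_iff coeff_map_poly coeff_pCons split: nat.split)

lemma ratmap_add: "map_poly (of_rat :: rat \<Rightarrow> complex) (p + q) = map_poly of_rat p + map_poly of_rat q"
  by (simp add: poly_eq_iff coeff_map_poly of_rat_add)

context
  fixes P :: "rat poly" and g
  assumes g: "g \<in> galois_group_C P"
begin

lemma gal_bij: "bij_betw g (splitting_field_C P) (splitting_field_C P)"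
  using g unfolding galois_group_C_def Let_def by auto

lemma gal_out: "x \<notin> splitting_field_C P \<Longrightarrow> g x = x"
  using g unfolding galois_group_C_def Let_def by auto

lemma gal_inj: "inj_on g (splitting_field_C P)"
  using gal_bij by (simp add: bij_betw_def)

lemma gal_into: "x \<in> splitting_field_C P \<Longrightarrow> g x \<in> splitting_field_C P"
  using gal_bij by (auto simp: bij_betw_def)

lemma gal_hom: "is_hom (splitting_field_C P) g"
proof -
  let ?K = "splitting_field_C P"
  have K: "subfield_C ?K" by (rule spl_subfield)
  have ad: "\<forall>x\<in>?K. \<forall>y\<in>?K. g (x + y) = g x + g y \<and> g (x * y) = g x * g y"
    using g unfolding galois_group_C_def Let_def by auto
  have "g 0 = g (0 + 0)" by simp
  also have "\<dots> = g 0 + g 0" using ad sf_0[OF K] by blast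
  finally have g0: "g 0 = 0" by simp
  have "g 1 = g (1 * 1)" by simp
  also have "\<dots> = g 1 * g 1" using ad sf_1[OF K] by blast
  finally have "g 1 = 0 \<or> g 1 = 1" by (metis mult_cancel_right1 mult_eq_0_iff)
  moreover have "g 1 \<noteq> g 0" using gal_inj sf_0[OF K] sf_1[OF K] by (metis inj_on_eq_iff zero_neq_one)
  ultimately have "g 1 = 1" using g0 by auto
  then show ?thesis using ad unfolding is_hom_def by auto
qed

lemma gal_root:
  assumes "x \<in> splitting_field_C P" "poly (map_poly of_rat Q) x = 0"
  shows "poly (map_poly of_rat Q) (g x) = 0"
proof -
  have K: "subfield_C (splitting_field_C P)" by (rule spl_subfield)
  have "poly (map_poly of_rat Q) (g x) = poly (map_poly g (map_poly of_rat Q)) (g x)"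
    by (simp add: mp_rat[OF K gal_hom])
  also have "\<dots> = g (poly (map_poly of_rat Q) x)" by (rule mp_poly[OF K gal_hom Epoly_rat[OF K] assms(1)])
  finally show ?thesis using assms(2) hom_0[OF K gal_hom] by simp
qed

lemma gal_id:
  assumes "\<And>s. s \<in> roots_of P \<Longrightarrow> g s = s"
  shows "g x = x"
proof -
  let ?K = "splitting_field_C P"
  have K: "subfield_C ?K" by (rule spl_subfield)
  note h = gal_hom
  define F where "F = {x\<in>?K. g x = x}"
  have "subfield_C F"
    unfolding subfield_C_def F_def
  proof (intro conjI ballI)
    show "0 \<in> {x \<in> ?K. g x = x}" using hom_0[OF K h] sf_0[OF K] by simp
    show "1 \<in> {x \<in> ?K. g x = x}" using hom_1[OF K h] sf_1[OF K] by simp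
    fix x y assume x: "x \<in> {x \<in> ?K. g x = x}" and y: "y \<in> {x \<in> ?K. g x = x}"
    show "x + y \<in> {x \<in> ?K. g x = x}" using x y by (auto simp: hom_add[OF K h] intro: sf_add[OF K])
    show "x * y \<in> {x \<in> ?K. g x = x}" using x y by (auto simp: hom_mult[OF K h] intro: sf_mult[OF K])
  next
    fix x assume x: "x \<in> {x \<in> ?K. g x = x}"
    show "- x \<in> {x \<in> ?K. g x = x}" using x by (auto simp: hom_uminus[OF K h] intro: sf_uminus[OF K])
    show "inverse x \<in> {x \<in> ?K. g x = x}"
      using x by (cases "x = 0") (auto simp: hom_inverse[OF K h] intro: sf_inverse[OF K])
  qed
  moreover have "roots_of P \<subseteq> F" using assms spl_roots unfolding F_def by blast
  ultimately have "?K \<subseteq> F" by (rule spl_min)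
  then show ?thesis unfolding F_def using gal_out by (cases "x \<in> ?K") auto
qed

end

lemma gal_comp:
  assumes g: "g \<in> galois_group_C P" and h: "h \<in> galois_group_C P"
  shows "g \<circ> h \<in> galois_group_C P"
proof -
  let ?K = "splitting_field_C P"
  have K: "subfield_C ?K" by (rule spl_subfield)
  show ?thesis
    unfolding galois_group_C_def Let_def
  proof (intro CollectI conjI ballI allI impI)
    show "bij_betw (g \<circ> h) ?K ?K" using gal_bij[OF g] gal_bij[OF h] by (rule bij_betw_trans[rotated])
    fix x y assume x: "x \<in> ?K" and y: "y \<in> ?K"
    show "(g \<circ> h) (x + y) = (g \<circ> h) x + (g \<circ> h) y"
      using x y hom_add[OF K gal_hom[OF h]] hom_add[OF K gal_hom[OF g]] gal_into[OF h] by simp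
    show "(g \<circ> h) (x * y) = (g \<circ> h) x * (g \<circ> h) y"
      using x y hom_mult[OF K gal_hom[OF h]] hom_mult[OF K gal_hom[OF g]] gal_into[OF h] by simp
  next
    fix x assume "x \<notin> ?K" then show "(g \<circ> h) x = x" using gal_out[OF g] gal_out[OF h] by simp
  qed
qed

definition irr_d :: "rat poly \<Rightarrow> bool" where
  "irr_d Q \<longleftrightarrow> Q \<noteq> 0 \<and> (\<forall>g h. Q = g * h \<longrightarrow> degree g = 0 \<or> degree h = 0)"

lemma Rats_poly_ex:
  assumes "Epoly (\<rat> :: complex set) m"
  shows "\<exists>m'. m = map_poly of_rat m'"
proof -
  define ir where "ir = (\<lambda>c::complex. SOME r. c = of_rat r)"
  have ir: "of_rat (ir c) = c" if "c \<in> \<rat>" for c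
  proof -
    from that obtain r where "c = of_rat r" by (auto elim: Rats_cases)
    then have "c = of_rat (ir c)" unfolding ir_def by (rule someI)
    then show ?thesis by simp
  qed
  have "ir 0 = 0" using ir[of 0] by simp
  then have "map_poly of_rat (map_poly ir m) = m"
    using assms by (simp add: poly_eq_iff coeff_map_poly Epoly_def ir)
  then show ?thesis by metis
qed

lemma trans_root:
  assumes P: "P \<noteq> 0" and Q: "irr_d Q" and x: "x \<in> splitting_field_C P"
    and qx: "poly (map_poly of_rat Q) x = 0" and qy: "poly (map_poly of_rat Q) y = 0"
  shows "\<exists>g\<in>galois_group_C P. g x = y"
proof -
  let ?R = "\<rat> :: complex set"
  have R: "subfield_C ?R" by (rule sf_Rats_is)
  have Q0: "Q \<noteq> 0" using Q by (simp add: irr_d_def)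
  have a: "alg ?R x" by (rule alg_rat[OF R Q0 qx])
  let ?m = "minp ?R x"
  obtain m' where m': "?m = map_poly of_rat m'" using Rats_poly_ex[OF minp(1)[OF R a]] by blast
  have m'0: "m' \<noteq> 0" using minp(2)[OF R a] m' by auto
  define t where "t = Q div m'"
  define r where "r = Q mod m'"
  have Qtr: "Q = t * m' + r" unfolding t_def r_def by (rule div_mult_mod_eq[symmetric])
  have "poly (map_poly of_rat Q) x = poly (map_poly of_rat t) x * poly ?m x + poly (map_poly of_rat r) x"
    by (subst Qtr) (simp only: ratmap_mult ratmap_add m' poly_add poly_mult)
  then have rx: "poly (map_poly of_rat r) x = 0" using qx minp(3)[OF R a] by simp
  have "r = 0"
  proof (rule ccontr)
    assume "r \<noteq> 0"
    then have "degree r < degree m'" using degree_mod_less[OF m'0, of Q] unfolding r_def by auto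
    moreover have "degree ?m \<le> degree (map_poly (of_rat :: rat \<Rightarrow> complex) r)"
      using minp(4)[OF R a Epoly_rat[OF R] _ rx] \<open>r \<noteq> 0\<close> by simp
    ultimately show False using m' by simp
  qed
  then have "Q = t * m'" using Qtr by simp
  moreover have "degree m' \<noteq> 0" using minp_deg[OF R a] m' by simp
  moreover have irr: "\<forall>g h. Q = g * h \<longrightarrow> degree g = 0 \<or> degree h = 0" using Q by (simp add: irr_d_def)
  ultimately have "degree t = 0" using irr[rule_format, OF \<open>Q = t * m'\<close>] by simp
  then obtain c where c: "t = [:c:]" by (metis degree_eq_zeroE)
  have "c \<noteq> 0" using Q0 \<open>Q = t * m'\<close> c by (metis mult_zero_left pCons_0_0)
  have "poly (map_poly of_rat Q) y = of_rat c * poly ?m y"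
    unfolding \<open>Q = t * m'\<close> c m' ratmap_mult ratmap_const by simp
  then have my: "poly (map_poly id ?m) y = 0" using qy \<open>c \<noteq> 0\<close> by simp
  have hid: "is_hom ?R id" by (simp add: is_hom_def)
  let ?K = "splitting_field_C P"
  have K: "subfield_C ?K" by (rule spl_subfield)
  have sub: "adjoin ?R x \<subseteq> ?K" by (rule adjoin_min[OF R K sf_Rats[OF K] x])
  from key_ext[OF P adjoin_subfield[OF R a] sub ext_hom[OF R hid a my]]
  obtain g where g1: "g \<in> galois_group_C P" and g2: "\<forall>z\<in>adjoin ?R x. g z = extd ?R id x y z" by blast
  have "g x = extd ?R id x y x" using g2 adjoin_alpha[OF R, of x] by blast
  then have "g x = y" using ext_alpha[OF R hid a my] by simp
  then show ?thesis using g1 by blast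
qed


section \<open>The trinomials\<close>

lemma ratmap_monom: "map_poly (of_rat :: rat \<Rightarrow> complex) (monom c k) = monom (of_rat c) k"
  by (simp add: map_poly_monom)

lemma trinom_eval: "poly (map_poly (of_rat :: rat \<Rightarrow> complex) (trinom n a b)) z = z^(2*n) + of_int a * z^n + of_int b"
  unfolding trinom_def ratmap_add ratmap_monom ratmap_const by (simp add: poly_monom)

lemma trinom_rat_eval: "poly (trinom n a b) x = x^(2*n) + of_int a * x^n + of_int b"
  unfolding trinom_def by (simp add: poly_monom)

lemma coeff_const': "coeff [:c:] k = (if k = 0 then c else 0)"
  by (cases k) auto

lemma trinom_nz: "n \<ge> 1 \<Longrightarrow> trinom n a b \<noteq> 0"
proof -
  assume n: "n \<ge> 1"
  have "coeff (trinom n a b) (2*n) = 1" using n unfolding trinom_def by (simp add: coeff_monom coeff_const')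
  then show ?thesis by auto
qed

lemma roots_trinom: "z \<in> roots_of (trinom n a b) \<longleftrightarrow> z^(2*n) + of_int a * z^n + of_int b = 0"
  unfolding roots_of_def trinom_eval by simp

lemma spl_mono:
  assumes d: "d \<ge> 1" "d dvd n" and n: "n \<ge> 1"
  shows "splitting_field_C (trinom d a b) \<subseteq> splitting_field_C (trinom n a b)"
proof (rule spl_min[OF spl_subfield], rule subsetI)
  fix y assume y: "y \<in> roots_of (trinom d a b)"
  obtain m where m: "n = d * m" using d by (auto elim: dvdE)
  then have m0: "m > 0" using n by (cases m) auto
  obtain x where x: "x ^ m = y" using nth_root_exists[OF m0] by blast
  have "x ^ n = (x ^ m) ^ d" unfolding m by (metis power_mult mult.commute)
  then have e1: "x ^ n = y ^ d" using x by simp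
  have "x ^ (2 * n) = (x ^ m) ^ (2 * d)" unfolding m by (metis power_mult mult.commute mult.left_commute)
  then have e2: "x ^ (2 * n) = y ^ (2 * d)" using x by simp
  have "x \<in> roots_of (trinom n a b)" using y e1 e2 by (simp add: roots_trinom)
  then have "x \<in> splitting_field_C (trinom n a b)" using spl_roots by blast
  then show "y \<in> splitting_field_C (trinom n a b)" using x sf_power[OF spl_subfield] by blast
qed

lemma part2:
  assumes n: "n \<ge> 1" and d: "d \<ge> 1" "d dvd n" and ab: "galois_abelian (trinom n a b)"
  shows "galois_abelian (trinom d a b)"
  unfolding galois_abelian_def
proof (intro ballI)
  fix \<sigma> \<tau> assume s: "\<sigma> \<in> galois_group_C (trinom d a b)" and t: "\<tau> \<in> galois_group_C (trinom d a b)"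
  let ?Kd = "splitting_field_C (trinom d a b)"
  have sub: "?Kd \<subseteq> splitting_field_C (trinom n a b)" by (rule spl_mono[OF d n])
  obtain \<sigma>' where s': "\<sigma>' \<in> galois_group_C (trinom n a b)" "\<forall>x\<in>?Kd. \<sigma>' x = \<sigma> x"
    using key_ext[OF trinom_nz[OF n] spl_subfield sub gal_hom[OF s]] by blast
  obtain \<tau>' where t': "\<tau>' \<in> galois_group_C (trinom n a b)" "\<forall>x\<in>?Kd. \<tau>' x = \<tau> x"
    using key_ext[OF trinom_nz[OF n] spl_subfield sub gal_hom[OF t]] by blast
  have c: "\<sigma>' \<circ> \<tau>' = \<tau>' \<circ> \<sigma>'" using ab s'(1) t'(1) unfolding galois_abelian_def by blast
  show "\<sigma> \<circ> \<tau> = \<tau> \<circ> \<sigma>"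
  proof
    fix x show "(\<sigma> \<circ> \<tau>) x = (\<tau> \<circ> \<sigma>) x"
    proof (cases "x \<in> ?Kd")
      case True
      have "(\<sigma> \<circ> \<tau>) x = (\<sigma>' \<circ> \<tau>') x" using True s'(2) t'(2) gal_into[OF t] by simp
      also have "\<dots> = (\<tau>' \<circ> \<sigma>') x" using c by simp
      also have "\<dots> = (\<tau> \<circ> \<sigma>) x" using True s'(2) t'(2) gal_into[OF s] by simp
      finally show ?thesis .
    next
      case False
      then show ?thesis using gal_out[OF s] gal_out[OF t] by simp
    qed
  qed
qed

lemma trinom_comp: "trinom (d*m) a b = trinom d a b \<circ>\<^sub>p monom 1 m"
proof -
  have "poly (trinom (d*m) a b) x = poly (trinom d a b \<circ>\<^sub>p monom 1 m) x" for x
  proof -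
    have "x ^ (2 * (d * m)) = (x ^ m) ^ (2 * d)" "x ^ (d * m) = (x ^ m) ^ d"
      by (simp_all add: power_mult[symmetric] mult_ac)
    then show ?thesis by (simp add: trinom_rat_eval poly_pcompose poly_monom)
  qed
  then show ?thesis using poly_eq_poly_eq_iff by blast
qed

lemma irr_desc:
  assumes d: "d \<ge> 1" and m: "m \<ge> 1" and irr: "irreducible (trinom (d*m) a b)"
  shows "irr_d (trinom d a b)"
  unfolding irr_d_def
proof (intro conjI allI impI)
  show "trinom d a b \<noteq> 0" by (rule trinom_nz[OF d])
  fix g h assume gh: "trinom d a b = g * h"
  have "trinom (d*m) a b = (g \<circ>\<^sub>p monom 1 m) * (h \<circ>\<^sub>p monom 1 m)"
    unfolding trinom_comp gh by (rule pcompose_mult)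
  then have "(g \<circ>\<^sub>p monom 1 m) dvd 1 \<or> (h \<circ>\<^sub>p monom 1 m) dvd 1" by (rule irreducibleD[OF irr])
  then have "degree (g \<circ>\<^sub>p monom 1 m) = 0 \<or> degree (h \<circ>\<^sub>p monom 1 m) = 0"
    by (auto simp: is_unit_poly_iff)
  then show "degree g = 0 \<or> degree h = 0" using m by (simp add: degree_pcompose degree_monom_eq)
qed


section \<open>Eisenstein and the cyclotomic polynomial of prime index\<close>

lemma eisenstein_aux:
  fixes Q g h :: "int poly" and p :: int
  assumes p: "prime p" and Qgh: "Q = g * h" and dg: "degree g > 0" and dh: "degree h > 0"
    and lc: "\<not> p dvd lead_coeff Q" and cs: "\<And>k. k < degree Q \<Longrightarrow> p dvd coeff Q k"
    and c0: "\<not> p^2 dvd coeff Q 0" and g0: "p dvd coeff g 0"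
  shows False
proof -
  have h0: "\<not> p dvd coeff h 0"
  proof
    assume "p dvd coeff h 0"
    then have "p * p dvd coeff g 0 * coeff h 0" using g0 by (rule mult_dvd_mono[rotated])
    then show False using c0 Qgh by (simp add: power2_eq_square coeff_mult_0)
  qed
  have gn: "g \<noteq> 0" and hn: "h \<noteq> 0" using dg dh by auto
  have "\<not> p dvd lead_coeff g" using lc Qgh by (metis dvd_mult2 lead_coeff_mult)
  define k where "k = (LEAST i. \<not> p dvd coeff g i)"
  have ex: "\<not> p dvd coeff g (degree g)" using \<open>\<not> p dvd lead_coeff g\<close> by simp
  have k1: "\<not> p dvd coeff g k" unfolding k_def by (rule LeastI[of _ "degree g"]) (rule ex)
  have k2: "k \<le> degree g" unfolding k_def by (rule Least_le) (rule ex)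
  have k3: "p dvd coeff g i" if "i < k" for i using not_less_Least[OF that[unfolded k_def]] by blast
  have "k \<noteq> 0" using k1 g0 by (metis)
  then obtain k' where k': "k = Suc k'" by (cases k) auto
  have "degree Q = degree g + degree h" using Qgh gn hn by (simp add: degree_mult_eq)
  then have "k < degree Q" using k2 dh by simp
  then have "p dvd coeff Q k" by (rule cs)
  moreover have "coeff Q k = (\<Sum>i\<le>k'. coeff g i * coeff h (k - i)) + coeff g k * coeff h 0"
    unfolding Qgh coeff_mult k' by (simp add: sum.atMost_Suc)
  moreover have "p dvd (\<Sum>i\<le>k'. coeff g i * coeff h (k - i))"
    by (intro dvd_sum dvd_mult2 k3) (simp add: k')
  ultimately have "p dvd coeff g k * coeff h 0" by (simp add: dvd_add_right_iff)
  then show False using p k1 h0 by (simp add: prime_dvd_mult_iff)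
qed

lemma eisenstein:
  fixes Q g h :: "int poly" and p :: int
  assumes p: "prime p" and Qgh: "Q = g * h" and dg: "degree g > 0" and dh: "degree h > 0"
    and lc: "\<not> p dvd lead_coeff Q" and cs: "\<And>k. k < degree Q \<Longrightarrow> p dvd coeff Q k"
    and c0: "\<not> p^2 dvd coeff Q 0"
  shows False
proof -
  have "g \<noteq> 0" "h \<noteq> 0" using dg dh by auto
  then have "degree Q > 0" using Qgh dg by (simp add: degree_mult_eq)
  then have "p dvd coeff Q 0" using cs by simp
  then have "p dvd coeff g 0 \<or> p dvd coeff h 0" using p Qgh by (simp add: coeff_mult_0 prime_dvd_mult_iff)
  then show False
  proof
    assume "p dvd coeff g 0"
    then show False using eisenstein_aux[OF p Qgh dg dh lc cs c0] by blast
  next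
    assume "p dvd coeff h 0"
    moreover have "Q = h * g" using Qgh by (simp add: mult.commute)
    ultimately show False using eisenstein_aux[OF p _ dh dg lc cs c0] by blast
  qed
qed

definition cyc :: "nat \<Rightarrow> rat poly" where "cyc p = (\<Sum>i<p. monom 1 i)"
definition Qc :: "nat \<Rightarrow> int poly" where "Qc p = (\<Sum>k<p. monom (int (p choose (k+1))) k)"
definition Qr :: "nat \<Rightarrow> rat poly" where "Qr p = (\<Sum>k<p. monom (of_nat (p choose (k+1))) k)"

lemma cyc_eval: "poly (map_poly (of_rat :: rat \<Rightarrow> complex) (cyc p)) z = (\<Sum>i<p. z^i)"
  unfolding cyc_def by (induction p) (simp_all add: ratmap_add ratmap_monom poly_monom)

lemma coeff_Qc: "coeff (Qc p) k = (if k < p then int (p choose (k+1)) else 0)"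
  unfolding Qc_def coeff_sum coeff_monom by (simp add: sum.delta)

lemma coeff_Qr: "coeff (Qr p) k = (if k < p then of_nat (p choose (k+1)) else 0)"
  unfolding Qr_def coeff_sum coeff_monom by (simp add: sum.delta)

lemma Qr_Qc: "Qr p = map_poly of_int (Qc p)"
  by (simp add: poly_eq_iff coeff_map_poly coeff_Qc coeff_Qr)

lemma geom: "(y - 1) * (\<Sum>i<n. y^i) = y^n - (1::'a::comm_ring_1)"
  by (induction n) (simp_all add: algebra_simps)

lemma cyc_shift: "p > 0 \<Longrightarrow> cyc p \<circ>\<^sub>p [:1,1:] = Qr p"
proof -
  assume p: "p > 0"
  then obtain n where n: "p = Suc n" by (cases p) auto
  have "poly ([:0,1:] * (cyc p \<circ>\<^sub>p [:1,1:])) x = poly ([:0,1:] * Qr p) x" for x :: rat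
  proof -
    have "poly ([:0,1:] * (cyc p \<circ>\<^sub>p [:1,1:])) x = ((x + 1) - 1) * (\<Sum>i<p. (x+1)^i)"
      by (simp add: poly_pcompose cyc_def poly_sum poly_monom algebra_simps)
    also have "\<dots> = (x + 1)^p - 1" by (rule geom)
    also have "(x + 1)^p = (\<Sum>k\<le>p. of_nat (p choose k) * x^k)" by (simp add: binomial_ring)
    also have "\<dots> = 1 + (\<Sum>k<p. of_nat (p choose (Suc k)) * x^(Suc k))"
      unfolding n sum.atMost_Suc_shift lessThan_Suc_atMost by simp
    also have "(\<Sum>k<p. of_nat (p choose (Suc k)) * x^(Suc k)) = x * (\<Sum>k<p. of_nat (p choose (k+1)) * x^k)"
      by (simp add: sum_distrib_left algebra_simps)
    also have "(\<Sum>k<p. of_nat (p choose (k+1)) * x^k) = poly (Qr p) x"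
      by (simp add: Qr_def poly_sum poly_monom)
    finally show ?thesis by simp
  qed
  then have "[:0,1:] * (cyc p \<circ>\<^sub>p [:1,1:]) = [:0,1:] * Qr p" using poly_eq_poly_eq_iff by blast
  then show ?thesis by (simp add: mult_left_cancel)
qed

lemma degree_Qc: "p > 0 \<Longrightarrow> degree (Qc p) = p - 1"
proof (rule antisym)
  assume p: "p > 0"
  show "degree (Qc p) \<le> p - 1" by (rule degree_le) (auto simp: coeff_Qc)
  show "p - 1 \<le> degree (Qc p)" by (rule le_degree) (use p in \<open>simp add: coeff_Qc\<close>)
qed

lemma cyc_irr:
  assumes p: "prime p"
  shows "irr_d (cyc p)"
  unfolding irr_d_def
proof (intro conjI allI impI)
  have p0: "p > 0" "p \<ge> 2" using p by (auto simp: prime_gt_0_nat prime_ge_2_nat)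
  have "coeff (cyc p) 0 = 1" unfolding cyc_def coeff_sum coeff_monom using p0 by (simp add: sum.delta)
  then show "cyc p \<noteq> 0" by auto
  fix g h assume gh: "cyc p = g * h"
  show "degree g = 0 \<or> degree h = 0"
  proof (rule ccontr)
    assume "\<not> (degree g = 0 \<or> degree h = 0)"
    then have dg: "degree g > 0" and dh: "degree h > 0" by auto
    have "map_poly of_int (Qc p) = (g \<circ>\<^sub>p [:1,1:]) * (h \<circ>\<^sub>p [:1,1:])"
      using cyc_shift[OF p0(1)] gh by (simp add: Qr_Qc pcompose_mult)
    from rat_to_int_factor[OF this] obtain g' h' where gh': "Qc p = g' * h'"
      "degree g' = degree (g \<circ>\<^sub>p [:1,1:])" "degree h' = degree (h \<circ>\<^sub>p [:1,1:])" by blast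
    have dg': "degree g' > 0" and dh': "degree h' > 0" using gh'(2,3) dg dh by (simp_all add: degree_pcompose)
    have ip: "prime (int p)" using p by (simp add: prime_nat_int_transfer)
    show False
    proof (rule eisenstein[OF ip gh'(1) dg' dh'])
      show "\<not> int p dvd lead_coeff (Qc p)" using p0 by (simp add: degree_Qc coeff_Qc)
      show "int p dvd coeff (Qc p) k" if "k < degree (Qc p)" for k
      proof -
        have "k + 1 < p" using that p0 by (simp add: degree_Qc)
        then have "p dvd (p choose (k+1))" using p by (intro dvd_choose_prime) auto
        then show ?thesis using that p0 by (simp add: degree_Qc coeff_Qc)
      qed
      show "\<not> (int p)^2 dvd coeff (Qc p) 0"
      proof
        assume "(int p)^2 dvd coeff (Qc p) 0"
        then have "int p * int p dvd int p" using p0 by (simp add: coeff_Qc power2_eq_square)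
        then have "int p * int p \<le> int p" using p0 by (intro zdvd_imp_le) auto
        moreover have "int p * int p \<ge> 2 * int p" using p0 by (intro mult_right_mono) auto
        ultimately show False using p0 by simp
      qed
    qed
  qed
qed


section \<open>Roots of unity\<close>

definition zeta :: "nat \<Rightarrow> complex" where "zeta p = cis (2 * pi / real p)"

lemma zeta_pow: "zeta p ^ k = cis (2 * pi * real k / real p)"
  unfolding zeta_def DeMoivre by (simp add: field_simps)

lemma zeta_p: "p > 0 \<Longrightarrow> zeta p ^ p = 1"
  unfolding zeta_pow by (simp add: complex_eq_iff)

lemma zeta_nz: "zeta p \<noteq> 0"
  unfolding zeta_def by simp

lemma zeta_mod: "p > 0 \<Longrightarrow> zeta p ^ k = zeta p ^ (k mod p)"
proof -
  assume p: "p > 0"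
  have "zeta p ^ k = zeta p ^ (p * (k div p) + k mod p)" by simp
  also have "\<dots> = (zeta p ^ p) ^ (k div p) * zeta p ^ (k mod p)" by (simp only: power_add power_mult)
  finally show ?thesis using zeta_p[OF p] by simp
qed

lemma zeta_inj: "p > 0 \<Longrightarrow> a < p \<Longrightarrow> b < p \<Longrightarrow> zeta p ^ a = zeta p ^ b \<Longrightarrow> a = b"
  using bij_betw_roots_unity[of p] unfolding bij_betw_def inj_on_def zeta_pow by auto

lemma zeta_eq: "p > 0 \<Longrightarrow> zeta p ^ a = zeta p ^ b \<longleftrightarrow> int p dvd (int a - int b)"
proof -
  assume p: "p > 0"
  have "zeta p ^ a = zeta p ^ b \<longleftrightarrow> a mod p = b mod p"
  proof
    assume "zeta p ^ a = zeta p ^ b"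
    then have "zeta p ^ (a mod p) = zeta p ^ (b mod p)" using zeta_mod[OF p] by metis
    then show "a mod p = b mod p" using zeta_inj[OF p] p by simp
  next
    assume "a mod p = b mod p"
    then show "zeta p ^ a = zeta p ^ b" using zeta_mod[OF p] by metis
  qed
  also have "\<dots> \<longleftrightarrow> int a mod int p = int b mod int p" by (metis of_nat_eq_iff zmod_int)
  also have "\<dots> \<longleftrightarrow> int p dvd (int a - int b)" by (rule mod_eq_dvd_iff)
  finally show ?thesis .
qed

lemma zeta_root: "p > 0 \<Longrightarrow> z ^ p = 1 \<Longrightarrow> \<exists>e. z = zeta p ^ e"
  using bij_betw_roots_unity[of p] unfolding bij_betw_def zeta_pow by auto

lemma cyc_root:
  assumes p: "p > 0" and m: "\<not> int p dvd int m"
  shows "poly (map_poly (of_rat :: rat \<Rightarrow> complex) (cyc p)) (zeta p ^ m) = 0"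
proof -
  let ?w = "zeta p ^ m"
  have "?w ^ p = (zeta p ^ p) ^ m" by (metis power_mult mult.commute)
  then have "?w ^ p = 1" using zeta_p[OF p] by simp
  moreover have "?w \<noteq> 1" using zeta_eq[OF p, of m 0] m by simp
  moreover have "(?w - 1) * (\<Sum>i<p. ?w ^ i) = ?w ^ p - 1" by (rule geom)
  ultimately show ?thesis unfolding cyc_eval by simp
qed



lemma main_contra:
  assumes p: "prime p" "p \<ge> 5" and irr: "irr_d (trinom p a b)" and b: "b \<noteq> 0"
    and ab: "galois_abelian (trinom p a b)"
  shows False
proof -
  define F where "F = trinom p a b"
  define K where "K = splitting_field_C F"
  define G where "G = galois_group_C F"
  define \<zeta> where "\<zeta> = zeta p"
  have p0: "p > 0" using p by auto
  have irrF: "irr_d F" using irr F_def by simp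
  have F0: "F \<noteq> 0" using irrF by (simp add: irr_d_def)
  have Ksf: "subfield_C K" unfolding K_def by (rule spl_subfield)
  have comm: "g (h x) = h (g x)" if "g \<in> G" "h \<in> G" for g h x
  proof -
    have "g \<circ> h = h \<circ> g" using ab that unfolding galois_abelian_def G_def F_def by blast
    then show ?thesis by (metis comp_apply)
  qed
  have hom: "is_hom K g" if "g \<in> G" for g using gal_hom that unfolding G_def K_def by blast
  have into: "g x \<in> K" if "g \<in> G" "x \<in> K" for g x using gal_into that unfolding G_def K_def by blast
  have injK: "inj_on g K" if "g \<in> G" for g using gal_inj that unfolding G_def K_def by blast
  have gmul: "g (x * y) = g x * g y" if "g \<in> G" "x \<in> K" "y \<in> K" for g x y using hom_mult[OF Ksf hom[OF that(1)] that(2,3)] .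
  have gpow: "g (x ^ n) = g x ^ n" if "g \<in> G" "x \<in> K" for g x n using hom_power[OF Ksf hom[OF that(1)] that(2)] .
  have g1: "g 1 = 1" if "g \<in> G" for g using hom_1[OF Ksf hom[OF that]] .
  have gint: "g (of_int n) = of_int n" if "g \<in> G" for g n using hom_of_int[OF Ksf hom[OF that]] .
  have rootF: "z \<in> roots_of F \<longleftrightarrow> z^(2*p) + of_int a * z^p + of_int b = 0" for z
    unfolding F_def by (rule roots_trinom)
  have trans: "\<exists>g\<in>G. g x = y" if "x \<in> K" "x \<in> roots_of Q" "y \<in> roots_of Q" "irr_d Q" for x y Q
    using trans_root[OF F0 that(4)] that unfolding roots_of_def G_def K_def by blast
  have spl: "roots_of F \<subseteq> K" unfolding K_def by (rule spl_roots)
  have zp: "\<zeta> ^ p = 1" unfolding \<zeta>_def by (rule zeta_p[OF p0])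
  have zeq: "\<zeta> ^ x = \<zeta> ^ y \<longleftrightarrow> int p dvd (int x - int y)" for x y unfolding \<zeta>_def by (rule zeta_eq[OF p0])
  have np1: "\<not> int p dvd 1" using p by auto
  have np2: "\<not> int p dvd 2"
  proof
    assume "int p dvd 2" then have "int p \<le> 2" by (intro zdvd_imp_le) auto
    then show False using p by simp
  qed
  have np3: "\<not> int p dvd 3"
  proof
    assume "int p dvd 3" then have "int p \<le> 3" by (intro zdvd_imp_le) auto
    then show False using p by simp
  qed
  obtain \<alpha> :: complex where \<alpha>: "\<alpha>^2 + of_int a * \<alpha> + of_int b = 0"
  proof -
    have "degree [:of_int b, of_int a, 1 :: complex:] = 2" by simp
    then obtain z where "poly [:of_int b, of_int a, 1 :: complex:] z = 0"
      using alg_closed_imp_poly_has_root[of "[:of_int b, of_int a, 1 :: complex:]"] by auto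
    then have "z^2 + of_int a * z + of_int b = 0" by (simp add: algebra_simps power2_eq_square)
    then show ?thesis using that by blast
  qed
  obtain \<theta> where \<theta>: "\<theta> ^ p = \<alpha>" using nth_root_exists[OF p0] by blast
  have \<alpha>0: "\<alpha> \<noteq> 0" using \<alpha> b by auto
  have \<theta>0: "\<theta> \<noteq> 0" using \<theta> \<alpha>0 p0 by auto
  have rootj: "\<zeta> ^ j * \<theta> \<in> roots_of F" for j
  proof -
    have "(\<zeta> ^ j) ^ p = (\<zeta> ^ p) ^ j" by (metis power_mult mult.commute)
    then have e1: "(\<zeta> ^ j * \<theta>) ^ p = \<alpha>" using zp \<theta> by (simp add: power_mult_distrib)
    have "(\<zeta> ^ j * \<theta>) ^ (2 * p) = ((\<zeta> ^ j * \<theta>) ^ p) ^ 2" by (metis power_mult mult.commute)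
    then have e2: "(\<zeta> ^ j * \<theta>) ^ (2 * p) = \<alpha> ^ 2" using e1 by simp
    show ?thesis unfolding rootF e1 e2 using \<alpha> .
  qed
  have \<theta>R: "\<theta> \<in> roots_of F" using rootj[of 0] by simp
  have \<theta>K: "\<theta> \<in> K" using \<theta>R spl by blast
  have \<alpha>K: "\<alpha> \<in> K" using \<theta> sf_power[OF Ksf \<theta>K] by blast
  have \<zeta>K: "\<zeta> \<in> K"
  proof -
    have "\<zeta> * \<theta> \<in> K" using rootj[of 1] spl by auto
    then have "\<zeta> * \<theta> / \<theta> \<in> K" using sf_divide[OF Ksf _ \<theta>K] by blast
    then show ?thesis using \<theta>0 by simp
  qed
  have zK: "\<zeta> ^ j \<in> K" for j using sf_power[OF Ksf \<zeta>K] .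
  have R3: "\<exists>k. g \<zeta> = \<zeta> ^ k \<and> \<not> int p dvd int k" if g: "g \<in> G" for g
  proof -
    have "(g \<zeta>) ^ p = 1" using gpow[OF g \<zeta>K, of p] zp g1[OF g] by simp
    then obtain k where k: "g \<zeta> = \<zeta> ^ k" using zeta_root[OF p0] unfolding \<zeta>_def by blast
    have "\<not> int p dvd int k"
    proof
      assume "int p dvd int k"
      then have "\<zeta> ^ k = \<zeta> ^ 0" using zeq[of k 0] by simp
      then have "g \<zeta> = g 1" using k g1[OF g] by simp
      then have "\<zeta> = 1" using injK[OF g] \<zeta>K sf_1[OF Ksf] by (auto dest: inj_onD)
      then have "\<zeta> ^ 1 = \<zeta> ^ 0" by simp
      then show False using zeq[of 1 0] np1 by simp
    qed
    then show ?thesis using k by blast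
  qed
  obtain \<sigma>0 where s0: "\<sigma>0 \<in> G" "\<sigma>0 \<theta> = \<zeta> * \<theta>"
    using trans[OF \<theta>K \<theta>R rootj[of 1] irrF] by auto
  obtain c where c: "\<sigma>0 \<zeta> = \<zeta> ^ c" "\<not> int p dvd int c" using R3[OF s0(1)] by blast
  have C: "int p dvd (int k + int j - (int c * int j + 1))"
    if h: "h \<in> G" "h \<theta> = \<zeta> ^ j * \<theta>" "h \<zeta> = \<zeta> ^ k" for h j k
  proof -
    have "h (\<sigma>0 \<theta>) = \<zeta> ^ (k + j) * \<theta>"
      using s0(2) gmul[OF h(1) \<zeta>K \<theta>K] h by (simp add: power_add)
    moreover have "\<sigma>0 (h \<theta>) = \<zeta> ^ (c * j + 1) * \<theta>"
      using h(2) gmul[OF s0(1) zK \<theta>K, of j] gpow[OF s0(1) \<zeta>K, of j] c(1) s0(2)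
      by (simp add: power_add power_mult)
    ultimately have "\<zeta> ^ (k + j) * \<theta> = \<zeta> ^ (c * j + 1) * \<theta>" using comm[OF h(1) s0(1), of \<theta>] by metis
    then have "\<zeta> ^ (k + j) = \<zeta> ^ (c * j + 1)" using \<theta>0 by simp
    then show ?thesis using zeq[of "k + j" "c * j + 1"] by (simp add: add.commute)
  qed
  have c1: "int p dvd (int c - 1)"
  proof (rule ccontr)
    assume nd: "\<not> int p dvd (int c - 1)"
    have ip: "prime (int p)" using p by (simp add: prime_nat_int_transfer)
    have "gcd (int c - 1) (int p) = 1"
      using prime_imp_coprime[OF ip nd] by (simp add: coprime_iff_gcd_eq_1 gcd.commute)
    then obtain u v where uv: "u * (int c - 1) + v * int p = 1" using bezout_int by metis
    define j where "j = nat ((- u) mod int p)"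
    have j: "int j = (- u) mod int p" unfolding j_def using p0 by simp
    have "int j + u = - (int p * ((- u) div int p))" unfolding j using minus_mod_eq_mult_div[of "-u" "int p"] by linarith
    then have "int p dvd (int j + u)" by (metis dvd_minus_iff dvd_triv_left)
    then have "int p dvd ((int c - 1) * (int j + u) + v * int p)" by simp
    moreover have "(int c - 1) * (int j + u) + v * int p = (int c - 1) * int j + 1" using uv by (simp add: algebra_simps)
    ultimately have dj: "int p dvd ((int c - 1) * int j + 1)" by simp
    obtain h where h: "h \<in> G" "h \<theta> = \<zeta> ^ j * \<theta>" using trans[OF \<theta>K \<theta>R rootj[of j] irrF] by auto
    obtain k where k: "h \<zeta> = \<zeta> ^ k" "\<not> int p dvd int k" using R3[OF h(1)] by blast
    have "int p dvd (int k + int j - (int c * int j + 1))" by (rule C[OF h k(1)])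
    then have "int p dvd ((int k + int j - (int c * int j + 1)) + ((int c - 1) * int j + 1))" using dj by (rule dvd_add)
    then show False using k(2) by (simp add: algebra_simps)
  qed
  have fix\<zeta>: "h \<zeta> = \<zeta>" if h: "h \<in> G" "h \<alpha> = \<alpha>" for h
  proof -
    have "(h \<theta>) ^ p = \<alpha>" using gpow[OF h(1) \<theta>K, of p] \<theta> h(2) by simp
    then have "(h \<theta> / \<theta>) ^ p = 1" using \<theta> \<alpha>0 by (simp add: power_divide)
    then obtain e where "h \<theta> / \<theta> = \<zeta> ^ e" using zeta_root[OF p0] unfolding \<zeta>_def by blast
    then have he: "h \<theta> = \<zeta> ^ e * \<theta>" using \<theta>0 by (simp add: field_simps)
    obtain k where k: "h \<zeta> = \<zeta> ^ k" using R3[OF h(1)] by blast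
    have "int p dvd (int k + int e - (int c * int e + 1))" by (rule C[OF h(1) he k])
    moreover have "int p dvd ((int c - 1) * int e)" using c1 by simp
    ultimately have "int p dvd ((int k + int e - (int c * int e + 1)) + (int c - 1) * int e)" by (rule dvd_add)
    then have "int p dvd (int k - int 1)" by (simp add: algebra_simps)
    then have "\<zeta> ^ k = \<zeta> ^ 1" using zeq[of k 1] by simp
    then show ?thesis using k by simp
  qed
  have other: "g \<alpha> = - of_int a - \<alpha>" if g: "g \<in> G" "g \<alpha> \<noteq> \<alpha>" for g
  proof -
    have "g (\<alpha>^2 + of_int a * \<alpha> + of_int b) = g \<alpha> ^ 2 + of_int a * g \<alpha> + of_int b"
      using \<alpha>K sf_of_int[OF Ksf] sf_power[OF Ksf] sf_mult[OF Ksf] sf_add[OF Ksf]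
      by (simp add: hom_add[OF Ksf hom[OF g(1)]] hom_mult[OF Ksf hom[OF g(1)]] hom_power[OF Ksf hom[OF g(1)]]
          gint[OF g(1)])
    then have "g \<alpha> ^ 2 + of_int a * g \<alpha> + of_int b = 0" using \<alpha> hom_0[OF Ksf hom[OF g(1)]] by simp
    moreover have "(g \<alpha> - \<alpha>) * (g \<alpha> + \<alpha> + of_int a) = (g \<alpha> ^ 2 + of_int a * g \<alpha> + of_int b) - (\<alpha>^2 + of_int a * \<alpha> + of_int b)"
      by (simp add: algebra_simps power2_eq_square)
    ultimately have "(g \<alpha> - \<alpha>) * (g \<alpha> + \<alpha> + of_int a) = 0" using \<alpha> by simp
    then have z: "g \<alpha> + \<alpha> + of_int a = 0" using g(2) by simp
    have "g \<alpha> = (g \<alpha> + \<alpha> + of_int a) - of_int a - \<alpha>" by simp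
    then show ?thesis unfolding z by simp
  qed
  have swap: "g1 (g \<alpha>) = \<alpha>" if g: "g1 \<in> G" "g \<in> G" "g1 \<alpha> \<noteq> \<alpha>" "g \<alpha> \<noteq> \<alpha>" for g1 g
  proof -
    have "g1 (- of_int a - \<alpha>) = g1 (- of_int a) - g1 \<alpha>"
      using hom_diff[OF Ksf hom[OF g(1)]] sf_uminus[OF Ksf sf_of_int[OF Ksf]] \<alpha>K by blast
    also have "g1 (- of_int a) = - of_int a" using gint[OF g(1), of "-a"] by simp
    finally show ?thesis using other[OF g(1,3)] other[OF g(2,4)] by simp
  qed
  have same: "g \<zeta> = g1 \<zeta>" if g: "g1 \<in> G" "g \<in> G" "g1 \<alpha> \<noteq> \<alpha>" "g \<alpha> \<noteq> \<alpha>" for g1 g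
  proof -
    have c1: "g1 \<circ> g \<in> G" using gal_comp g(1,2) unfolding G_def by blast
    have c2: "g1 \<circ> g1 \<in> G" using gal_comp g(1) unfolding G_def by blast
    have "(g1 \<circ> g) \<zeta> = \<zeta>" using fix\<zeta>[OF c1] swap[OF g] by simp
    moreover have "(g1 \<circ> g1) \<zeta> = \<zeta>" using fix\<zeta>[OF c2] swap[OF g(1,1,3,3)] by simp
    ultimately have "g1 (g \<zeta>) = g1 (g1 \<zeta>)" by simp
    then show ?thesis using injK[OF g(1)] into[OF g(2) \<zeta>K] into[OF g(1) \<zeta>K] by (auto dest: inj_onD)
  qed
  have cycR: "\<zeta> ^ m \<in> roots_of (cyc p)" if "\<not> int p dvd int m" for m
    using cyc_root[OF p0 that] unfolding roots_of_def \<zeta>_def by simp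
  have irrC: "irr_d (cyc p)" by (rule cyc_irr[OF p(1)])
  have \<zeta>R: "\<zeta> \<in> roots_of (cyc p)" using cycR[of 1] np1 by simp
  obtain g2 where g2: "g2 \<in> G" "g2 \<zeta> = \<zeta> ^ 2" using trans[OF \<zeta>K \<zeta>R cycR[of 2] irrC] np2 by auto
  obtain g3 where g3: "g3 \<in> G" "g3 \<zeta> = \<zeta> ^ 3" using trans[OF \<zeta>K \<zeta>R cycR[of 3] irrC] np3 by auto
  have "g2 \<alpha> \<noteq> \<alpha>"
  proof
    assume "g2 \<alpha> = \<alpha>"
    then have "\<zeta> ^ 2 = \<zeta> ^ 1" using fix\<zeta>[OF g2(1)] g2(2) by simp
    then show False using zeq[of 2 1] np1 by simp
  qed
  moreover have "g3 \<alpha> \<noteq> \<alpha>"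
  proof
    assume "g3 \<alpha> = \<alpha>"
    then have "\<zeta> ^ 3 = \<zeta> ^ 1" using fix\<zeta>[OF g3(1)] g3(2) by simp
    then show False using zeq[of 3 1] np2 by simp
  qed
  ultimately have "g3 \<zeta> = g2 \<zeta>" using same[OF g2(1) g3(1)] by blast
  then have "\<zeta> ^ 3 = \<zeta> ^ 2" using g2 g3 by simp
  then show False using zeq[of 3 2] np1 by simp
qed


lemma smooth23:
  fixes n :: nat
  assumes "n \<ge> 1" "\<And>q. prime q \<Longrightarrow> q dvd n \<Longrightarrow> q \<le> 3"
  shows "\<exists>r s :: nat. n = 2^r * 3^s"
  using assms
proof (induction n rule: less_induct)
  case (less n)
  show ?case
  proof (cases "n = 1")
    case True then show ?thesis by (intro exI[of _ 0]) simp
  next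
    case False
    then obtain q where q: "prime q" "q dvd n" using prime_factor_nat[of n] by blast
    have q3: "q \<le> 3" using less.prems(2) q by blast
    have q2: "q \<ge> 2" using q(1) by (simp add: prime_ge_2_nat)
    obtain m where m: "n = q * m" using q(2) by (auto elim: dvdE)
    have m1: "m \<ge> 1" using m less.prems(1) by (cases m) auto
    have mn: "m < n" using m m1 q2 by simp
    have "\<exists>r s :: nat. m = 2^r * 3^s"
    proof (rule less.IH[OF mn m1])
      fix q' assume "prime q'" "q' dvd m"
      then show "q' \<le> 3" using less.prems(2) m by auto
    qed
    then obtain r s where rs: "m = 2^r * 3^s" by blast
    show ?thesis
    proof (cases "q = 2")
      case True
      then have "n = 2^(Suc r) * 3^s" using m rs by simp
      then show ?thesis by blast
    next
      case False
      then have "q = 3" using q2 q3 by simp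
      then have "n = 2^r * 3^(Suc s)" using m rs by simp
      then show ?thesis by blast
    qed
  qed
qed

theorem lemma2p1:
  fixes n :: nat and a b :: int
  assumes "n \<ge> 1" and "a * b \<noteq> 0"
    and "irreducible (trinom n a b)"
    and "galois_abelian (trinom n a b)"
  shows "(\<exists>r s :: nat. n = 2 ^ r * 3 ^ s) \<and>
         (\<forall>d :: nat. d \<ge> 1 \<and> d dvd n \<longrightarrow> galois_abelian (trinom d a b))"
proof (intro conjI allI impI)
  show "\<exists>r s :: nat. n = 2 ^ r * 3 ^ s"
  proof (rule smooth23[OF assms(1)])
    fix q :: nat assume q: "prime q" "q dvd n"
    show "q \<le> 3"
    proof (rule ccontr)
      assume "\<not> q \<le> 3"
      moreover have "q \<noteq> 4"
      proof
        assume "q = 4"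
        then have "(2::nat) dvd q" by simp
        then have "(2::nat) = 1 \<or> 2 = q" using q(1) unfolding prime_nat_iff by blast
        then show False using \<open>q = 4\<close> by simp
      qed
      ultimately have q5: "q \<ge> 5" by simp
      obtain m where m: "n = q * m" using q(2) by (auto elim: dvdE)
      have m1: "m \<ge> 1" using m assms(1) by (cases m) auto
      have irr: "irr_d (trinom q a b)" using irr_desc[OF _ m1, of q a b] assms(3) m q5 by simp
      have ab: "galois_abelian (trinom q a b)" using part2[OF assms(1) _ q(2) assms(4)] q5 by simp
      have b: "b \<noteq> 0" using assms(2) by simp
      show False by (rule main_contra[OF q(1) q5 irr b ab])
    qed
  qed
next
  fix d :: nat assume "1 \<le> d \<and> d dvd n"
  then show "galois_abelian (trinom d a b)" using part2[OF assms(1) _ _ assms(4)] by blast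
qed


end
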